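(* If $s>0$ is a knot of $p_0$, then with probability one there exists $n_0$ such that for all $n\ge n_0$, $s$ is a knot of $\hat p_n$.
   Context: For a real sequence $p=(p(k))_{k\in\mathbb N}$ (with $\mathbb N=\{0,1,2,\dots\}$) and $k\ge1$ let $\Delta p(k)=p(k+1)-2p(k)+p(k-1)$. A sequence $p$ is convex if $\Delta p(k)\ge0$ for all integers $k\ge1$; let $\mathcal C$ be the set of convex sequences with $\sum_k p(k)^2<\infty$. A knot of a sequence $p$ is an integer $k\ge1$ with $\Delta p(k)>0$. Let $p_0$ be a convex probability mass function (pmf) on $\mathbb N$ whose support is either $\mathbb N$ or $\{0,1,\dots,S\}$ for some integer $S\ge1$. Let $X_1,X_2,\dots$ be i.i.d. with pmf $p_0$, let $p_n(j)=\frac1n\sum_{i=1}^n\mathbb 1\{X_i=j\}$, and let the least squares estimator $\hat p_n$ be the unique minimizer over $\mathcal C$ of $\Phi_n(p)=\frac12\sum_{j\in\mathbb N}(p_n(j)-p(j))^2$. *)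

theory Defs
  imports "HOL-Probability.Probability"
begin

text \<open>Second difference of a real sequence at k (meaningful for k \<ge> 1).\<close>
definition sdiff :: "(nat \<Rightarrow> real) \<Rightarrow> nat \<Rightarrow> real" where
  "sdiff p k = p (k + 1) - 2 * p k + p (k - 1)"

definition convex_seq :: "(nat \<Rightarrow> real) \<Rightarrow> bool" where
  "convex_seq p \<longleftrightarrow> (\<forall>k\<ge>1. sdiff p k \<ge> 0)"

definition convexL2 :: "(nat \<Rightarrow> real) set" where
  "convexL2 = {p. convex_seq p \<and> summable (\<lambda>k. (p k)\<^sup>2)}"

definition is_knot :: "(nat \<Rightarrow> real) \<Rightarrow> nat \<Rightarrow> bool" where
  "is_knot p k \<longleftrightarrow> k \<ge> 1 \<and> sdiff p k > 0"

definition emp_pmf :: "(nat \<Rightarrow> 'a \<Rightarrow> nat) \<Rightarrow> nat \<Rightarrow> 'a \<Rightarrow> nat \<Rightarrow> real" where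
  "emp_pmf X n \<omega> j = real (card {i \<in> {1..n}. X i \<omega> = j}) / real n"

definition Phi :: "(nat \<Rightarrow> real) \<Rightarrow> (nat \<Rightarrow> real) \<Rightarrow> real" where
  "Phi pn p = (1/2) * (\<Sum>j. (pn j - p j)\<^sup>2)"

definition lse :: "(nat \<Rightarrow> real) \<Rightarrow> (nat \<Rightarrow> real)" where
  "lse pn = (THE p. p \<in> convexL2 \<and> (\<forall>q\<in>convexL2. Phi pn p \<le> Phi pn q))"

end

theory Submission
  imports Defs
begin


definition SS :: "(nat \<Rightarrow> real) \<Rightarrow> (nat \<Rightarrow> real) \<Rightarrow> real" where
  "SS r p = (\<Sum>j. (r j - p j)\<^sup>2)"

lemma Phi_SS: "Phi r p = SS r p / 2"
  by (simp add: Phi_def SS_def)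

lemma comp_test:
  fixes f g :: "nat \<Rightarrow> real"
  assumes "summable g" "\<And>n. norm (f n) \<le> g n"
  shows "summable f"
  using summable_comparison_test'[OF assms(1), of 0 f] assms(2) by blast

lemma sq_summable_diff:
  fixes f g :: "nat \<Rightarrow> real"
  assumes "summable (\<lambda>j. (f j)\<^sup>2)" "summable (\<lambda>j. (g j)\<^sup>2)"
  shows "summable (\<lambda>j. (f j - g j)\<^sup>2)"
proof (rule comp_test)
  show "summable (\<lambda>j. 2 * (f j)\<^sup>2 + 2 * (g j)\<^sup>2)"
    using assms by (intro summable_add summable_mult)
  fix n :: nat
  have "(f n - g n)\<^sup>2 \<le> 2 * (f n)\<^sup>2 + 2 * (g n)\<^sup>2"
    using zero_le_power2[of "f n + g n"] by (simp add: power2_eq_square algebra_simps)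
  then show "norm ((f n - g n)\<^sup>2) \<le> 2 * (f n)\<^sup>2 + 2 * (g n)\<^sup>2" by simp
qed

lemma SS_nonneg:
  assumes "summable (\<lambda>j. (r j)\<^sup>2)" "summable (\<lambda>j. (p j)\<^sup>2)"
  shows "0 \<le> SS r p"
  unfolding SS_def by (rule suminf_nonneg[OF sq_summable_diff[OF assms]]) simp

lemma mid_in:
  assumes "p \<in> convexL2" "q \<in> convexL2"
  shows "(\<lambda>j. (p j + q j) / 2) \<in> convexL2"
proof -
  have cp: "\<And>k. k \<ge> 1 \<Longrightarrow> sdiff p k \<ge> 0" and cq: "\<And>k. k \<ge> 1 \<Longrightarrow> sdiff q k \<ge> 0"
    using assms by (auto simp: convexL2_def convex_seq_def)
  have h: "sdiff (\<lambda>j. (p j + q j) / 2) k = (sdiff p k + sdiff q k) / 2" for k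
    by (simp add: sdiff_def field_simps)
  have c: "convex_seq (\<lambda>j. (p j + q j) / 2)"
    unfolding convex_seq_def
  proof (intro allI impI)
    fix k :: nat assume "1 \<le> k"
    then have "0 \<le> sdiff p k" "0 \<le> sdiff q k" using cp cq by auto
    then show "0 \<le> sdiff (\<lambda>j. (p j + q j) / 2) k" unfolding h by simp
  qed
  have s: "summable (\<lambda>j. ((p j + q j) / 2)\<^sup>2)"
  proof (rule comp_test)
    show "summable (\<lambda>j. (p j)\<^sup>2 + (q j)\<^sup>2)"
      using assms by (intro summable_add) (auto simp: convexL2_def)
    fix n :: nat
    have "((p n + q n) / 2)\<^sup>2 \<le> (p n)\<^sup>2 + (q n)\<^sup>2"
      using zero_le_power2[of "p n - q n"] zero_le_power2[of "p n + q n"] by (simp add: power2_eq_square field_simps)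
    then show "norm (((p n + q n) / 2)\<^sup>2) \<le> (p n)\<^sup>2 + (q n)\<^sup>2" by simp
  qed
  show ?thesis using c s by (simp add: convexL2_def)
qed

lemma parallelogram:
  assumes r: "summable (\<lambda>j. (r j)\<^sup>2)" and p: "summable (\<lambda>j. (p j)\<^sup>2)" and q: "summable (\<lambda>j. (q j)\<^sup>2)"
  shows "SS r (\<lambda>j. (p j + q j) / 2) = SS r p / 2 + SS r q / 2 - (\<Sum>j. (p j - q j)\<^sup>2) / 4"
proof -
  have sp: "summable (\<lambda>j. (r j - p j)\<^sup>2)" using sq_summable_diff[OF r p] .
  have sq: "summable (\<lambda>j. (r j - q j)\<^sup>2)" using sq_summable_diff[OF r q] .
  have spq: "summable (\<lambda>j. (p j - q j)\<^sup>2)" using sq_summable_diff[OF p q] .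
  have eq: "(r j - (p j + q j) / 2)\<^sup>2 = (r j - p j)\<^sup>2 / 2 + (r j - q j)\<^sup>2 / 2 - (p j - q j)\<^sup>2 / 4" for j
    by (simp add: power2_eq_square field_simps)
  have "SS r (\<lambda>j. (p j + q j) / 2) = (\<Sum>j. (r j - p j)\<^sup>2 / 2 + (r j - q j)\<^sup>2 / 2 - (p j - q j)\<^sup>2 / 4)"
    unfolding SS_def eq ..
  also have "\<dots> = (\<Sum>j. (r j - p j)\<^sup>2 / 2 + (r j - q j)\<^sup>2 / 2) - (\<Sum>j. (p j - q j)\<^sup>2 / 4)"
    using suminf_diff[OF summable_add[OF summable_divide[OF sp] summable_divide[OF sq]] summable_divide[OF spq]] by simp
  also have "\<dots> = (\<Sum>j. (r j - p j)\<^sup>2 / 2) + (\<Sum>j. (r j - q j)\<^sup>2 / 2) - (\<Sum>j. (p j - q j)\<^sup>2 / 4)"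
    by (subst suminf_add) (intro summable_divide sp sq, intro summable_divide sp sq, simp)
  also have "\<dots> = SS r p / 2 + SS r q / 2 - (\<Sum>j. (p j - q j)\<^sup>2) / 4"
    unfolding SS_def by (simp add: suminf_divide sp sq spq)
  finally show ?thesis .
qed

lemma term_le_suminf:
  assumes "summable f" "\<And>j. f j \<ge> (0::real)"
  shows "f j \<le> suminf f"
  using sum_le_suminf[OF assms(1), of "{j}"] assms(2) by simp

lemma exists_min:
  assumes r: "summable (\<lambda>j. (r j)\<^sup>2)"
  shows "\<exists>p\<in>convexL2. \<forall>q\<in>convexL2. SS r p \<le> SS r q"
proof -
  define V where "V = SS r ` convexL2"
  have z: "(\<lambda>_. 0) \<in> convexL2" by (simp add: convexL2_def convex_seq_def sdiff_def)
  have Vne: "V \<noteq> {}" using z by (auto simp: V_def)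
  have Vnn: "0 \<le> v" if "v \<in> V" for v
    using that r by (auto simp: V_def convexL2_def intro!: SS_nonneg)
  define m where "m = Inf V"
  have bdd: "bdd_below V" using Vnn by (meson bdd_belowI)
  have mle: "m \<le> SS r q" if "q \<in> convexL2" for q
    using cInf_lower[OF _ bdd] that by (auto simp: V_def m_def)
  have "\<exists>q\<in>convexL2. SS r q < m + 1/(real k+1)" for k
  proof -
    have "Inf V < m + 1/(real k+1)" by (simp add: m_def add_pos_pos)
    from cInf_lessD[OF Vne this] show ?thesis by (auto simp: V_def)
  qed
  then obtain Q where QC: "\<And>k. Q k \<in> convexL2" and QS: "\<And>k. SS r (Q k) < m + 1/(real k+1)"
    by metis
  have Q2: "summable (\<lambda>j. (Q k j)\<^sup>2)" for k using QC[of k] by (simp add: convexL2_def)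
  have dist: "(\<Sum>j. (Q k j - Q l j)\<^sup>2) \<le> 2/(real k+1) + 2/(real l+1)" for k l
  proof -
    have "m \<le> SS r (\<lambda>j. (Q k j + Q l j) / 2)" by (rule mle[OF mid_in[OF QC QC]])
    also have "\<dots> = SS r (Q k) / 2 + SS r (Q l) / 2 - (\<Sum>j. (Q k j - Q l j)\<^sup>2) / 4"
      by (rule parallelogram[OF r Q2 Q2])
    finally show ?thesis using QS[of k] QS[of l] by linarith
  qed
  have pt: "(Q k j - Q l j)\<^sup>2 \<le> 2/(real k+1) + 2/(real l+1)" for k l j
  proof -
    have "(Q k j - Q l j)\<^sup>2 \<le> (\<Sum>j. (Q k j - Q l j)\<^sup>2)"
      by (rule term_le_suminf[OF sq_summable_diff[OF Q2[of k] Q2[of l]]]) simp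
    then show ?thesis using dist[of k l] by linarith
  qed
  have cau: "Cauchy (\<lambda>k. Q k j)" for j
  proof (rule CauchyI)
    fix e :: real assume e: "0 < e"
    obtain M :: nat where M: "real M > 4 / e\<^sup>2" using reals_Archimedean2 by blast
    have M': "4 / (real M + 1) < e\<^sup>2"
    proof -
      have "4 / e\<^sup>2 < real M + 1" using M by simp
      then show ?thesis using e by (simp add: field_simps)
    qed
    show "\<exists>M. \<forall>m\<ge>M. \<forall>n\<ge>M. norm (Q m j - Q n j) < e"
    proof (intro exI allI impI)
      fix a b assume a: "M \<le> a" and b: "M \<le> b"
      have "2/(real a+1) \<le> 2/(real M+1)" using a by (simp add: frac_le)
      moreover have "2/(real b+1) \<le> 2/(real M+1)" using b by (simp add: frac_le)
      ultimately have "(Q a j - Q b j)\<^sup>2 < e\<^sup>2" using pt[of a j b] M' by simp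
      then show "norm (Q a j - Q b j) < e" using e
        by (metis abs_of_pos power2_abs power_less_imp_less_base abs_ge_zero real_norm_def)
    qed
  qed
  define p where "p j = lim (\<lambda>k. Q k j)" for j
  have conv: "(\<lambda>k. Q k j) \<longlonglongrightarrow> p j" for j
    using cau[of j] by (simp add: Cauchy_convergent_iff convergent_LIMSEQ_iff p_def)
  have cx: "convex_seq p"
    unfolding convex_seq_def
  proof (intro allI impI)
    fix k :: nat assume k: "1 \<le> k"
    have "(\<lambda>i. sdiff (Q i) k) \<longlonglongrightarrow> sdiff p k"
      unfolding sdiff_def by (intro tendsto_intros conv)
    moreover have "\<forall>i. 0 \<le> sdiff (Q i) k" using QC k by (auto simp: convexL2_def convex_seq_def)
    ultimately show "0 \<le> sdiff p k" by (intro LIMSEQ_le_const) auto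
  qed
  have part: "(\<Sum>j<N. (r j - p j)\<^sup>2) \<le> m" for N
  proof -
    have "(\<lambda>k. \<Sum>j<N. (r j - Q k j)\<^sup>2) \<longlonglongrightarrow> (\<Sum>j<N. (r j - p j)\<^sup>2)"
      by (intro tendsto_intros conv)
    moreover have "(\<lambda>k. m + 1/(real k+1)) \<longlonglongrightarrow> m + 0"
    proof (intro tendsto_intros)
      show "(\<lambda>k. 1/(real k+1)) \<longlonglongrightarrow> 0"
        using LIMSEQ_inverse_real_of_nat by (simp add: inverse_eq_divide add.commute)
    qed
    moreover have "\<exists>K. \<forall>k\<ge>K. (\<Sum>j<N. (r j - Q k j)\<^sup>2) \<le> m + 1/(real k+1)"
    proof (intro exI allI impI)
      fix k :: nat
      have "(\<Sum>j<N. (r j - Q k j)\<^sup>2) \<le> SS r (Q k)"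
        unfolding SS_def by (rule sum_le_suminf[OF sq_summable_diff[OF r Q2]]) auto
      then show "(\<Sum>j<N. (r j - Q k j)\<^sup>2) \<le> m + 1/(real k+1)" using QS[of k] by linarith
    qed
    ultimately show ?thesis by (intro LIMSEQ_le) auto
  qed
  have summ: "summable (\<lambda>j. (r j - p j)\<^sup>2)"
  proof (rule bounded_imp_summable[where B = m])
    fix n show "(\<Sum>k\<le>n. (r k - p k)\<^sup>2) \<le> m" using part[of "Suc n"] by (metis lessThan_Suc_atMost)
  qed simp
  have SSp: "SS r p \<le> m"
    unfolding SS_def by (rule suminf_le_const[OF summ part])
  have p2: "summable (\<lambda>j. (p j)\<^sup>2)"
  proof (rule comp_test)
    show "summable (\<lambda>j. 2 * (r j - p j)\<^sup>2 + 2 * (r j)\<^sup>2)"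
      using summ r by (intro summable_add summable_mult)
    fix n :: nat
    have "(p n)\<^sup>2 \<le> 2 * (r n - p n)\<^sup>2 + 2 * (r n)\<^sup>2"
      using zero_le_power2[of "2 * r n - p n"] by (simp add: power2_eq_square algebra_simps)
    then show "norm ((p n)\<^sup>2) \<le> 2 * (r n - p n)\<^sup>2 + 2 * (r n)\<^sup>2" by simp
  qed
  have "p \<in> convexL2" using cx p2 by (simp add: convexL2_def)
  then show ?thesis using SSp mle by force
qed

lemma unique_min:
  assumes r: "summable (\<lambda>j. (r j)\<^sup>2)"
    and p: "p \<in> convexL2" "\<forall>q\<in>convexL2. SS r p \<le> SS r q"
    and q: "q \<in> convexL2" "\<forall>p\<in>convexL2. SS r q \<le> SS r p"
  shows "p = q"
proof -
  have p2: "summable (\<lambda>j. (p j)\<^sup>2)" and q2: "summable (\<lambda>j. (q j)\<^sup>2)"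
    using p q by (auto simp: convexL2_def)
  have "SS r p \<le> SS r (\<lambda>j. (p j + q j) / 2)" using p(2) mid_in[OF p(1) q(1)] by blast
  also have "\<dots> = SS r p / 2 + SS r q / 2 - (\<Sum>j. (p j - q j)\<^sup>2) / 4"
    by (rule parallelogram[OF r p2 q2])
  finally have "(\<Sum>j. (p j - q j)\<^sup>2) \<le> 0" using p q by force
  moreover have "0 \<le> (\<Sum>j. (p j - q j)\<^sup>2)"
    by (rule suminf_nonneg[OF sq_summable_diff[OF p2 q2]]) simp
  ultimately have "(\<Sum>j. (p j - q j)\<^sup>2) = 0" by simp
  then have "\<forall>j. (p j - q j)\<^sup>2 = 0"
    using suminf_eq_zero_iff[OF sq_summable_diff[OF p2 q2]] by simp
  then show ?thesis by auto
qed

lemma lse_min: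
  assumes r: "summable (\<lambda>j. (r j)\<^sup>2)"
  shows "lse r \<in> convexL2 \<and> (\<forall>q\<in>convexL2. Phi r (lse r) \<le> Phi r q)"
proof -
  have ex: "\<exists>!p. p \<in> convexL2 \<and> (\<forall>q\<in>convexL2. Phi r p \<le> Phi r q)"
  proof -
    obtain p where "p \<in> convexL2" "\<forall>q\<in>convexL2. SS r p \<le> SS r q" using exists_min[OF r] by blast
    then show ?thesis
      unfolding Phi_SS by (intro ex1I[of _ p]) (auto intro: unique_min[OF r])
  qed
  show ?thesis unfolding lse_def by (rule theI'[OF ex])
qed



lemma sq_le_sum:
  fixes a b :: real
  assumes "0 \<le> a" "a \<le> 1" "0 \<le> b" "b \<le> 1"
  shows "(a - b)\<^sup>2 \<le> a + b"
proof (cases "a \<le> b")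
  case True
  have "(a - b)\<^sup>2 = (b - a) * (b - a)" by (simp add: power2_eq_square algebra_simps)
  also have "\<dots> \<le> (b - a) * 1" using True assms by (intro mult_left_mono) auto
  finally show ?thesis using assms by simp
next
  case False
  have "(a - b)\<^sup>2 = (a - b) * (a - b)" by (simp add: power2_eq_square)
  also have "\<dots> \<le> (a - b) * 1" using False assms by (intro mult_left_mono) auto
  finally show ?thesis using assms by simp
qed

lemma sums_le_1:
  fixes f :: "nat \<Rightarrow> real"
  assumes "f sums 1" "\<And>j. 0 \<le> f j"
  shows "f j \<le> 1"
  using term_le_suminf[OF sums_summable[OF assms(1)] assms(2), of j] sums_unique[OF assms(1)] by simp

lemma l2_conv:
  fixes e :: "nat \<Rightarrow> nat \<Rightarrow> real" and p :: "nat \<Rightarrow> real"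
  assumes e0: "\<And>n j. 0 \<le> e n j" and es: "\<And>n. n \<ge> 1 \<Longrightarrow> e n sums 1"
    and p0: "\<And>j. 0 \<le> p j" and ps: "p sums 1"
    and lim: "\<And>j. (\<lambda>n. e n j) \<longlonglongrightarrow> p j"
  shows "(\<lambda>n. SS (e n) p) \<longlonglongrightarrow> 0"
proof -
  define B where "B n N = (\<Sum>j<N. (e n j - p j)\<^sup>2) + 2 - (\<Sum>j<N. e n j + p j)" for n N
  have bound: "SS (e n) p \<le> B n N" "0 \<le> SS (e n) p" if n: "n \<ge> 1" for n N
  proof -
    have e1: "e n j \<le> 1" for j using sums_le_1[OF es[OF n] e0] .
    have p1: "p j \<le> 1" for j using sums_le_1[OF ps p0] .
    have gs: "(\<lambda>j. e n j + p j) sums (1 + 1)" by (intro sums_add es n ps)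
    have G: "(\<lambda>j. if j \<in> {..<N} then (e n j - p j)\<^sup>2 else e n j + p j) sums B n N"
      by (rule sums_If_finite_set'[OF gs]) (simp_all add: B_def sum_subtractf)
    have le: "(e n j - p j)\<^sup>2 \<le> (if j \<in> {..<N} then (e n j - p j)\<^sup>2 else e n j + p j)" for j
      using sq_le_sum[OF e0 e1 p0 p1] by simp
    have sm: "summable (\<lambda>j. (e n j - p j)\<^sup>2)"
      by (rule comp_test[OF sums_summable[OF G]]) (use le in auto)
    show "SS (e n) p \<le> B n N" unfolding SS_def
      by (rule sums_le[OF le summable_sums[OF sm] G])
    show "0 \<le> SS (e n) p" unfolding SS_def by (rule suminf_nonneg[OF sm]) simp
  qed
  show ?thesis
  proof (rule LIMSEQ_I)
    fix r :: real assume r: "0 < r"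
    have "(\<lambda>N. \<Sum>j<N. p j) \<longlonglongrightarrow> 1" using ps by (simp add: sums_def)
    then have "eventually (\<lambda>N. 1 - r/4 < (\<Sum>j<N. p j)) sequentially"
      using r by (intro order_tendstoD(1)) auto
    then obtain N where N: "1 - r/4 < (\<Sum>j<N. p j)"
      by (auto simp: eventually_sequentially)
    have "(\<lambda>n. B n N) \<longlonglongrightarrow> (\<Sum>j<N. (p j - p j)\<^sup>2) + 2 - (\<Sum>j<N. p j + p j)"
      unfolding B_def by (intro tendsto_intros lim)
    moreover have "(\<Sum>j<N. (p j - p j)\<^sup>2) + 2 - (\<Sum>j<N. p j + p j) < r"
      using N r by (simp add: sum.distrib sum_distrib_left[symmetric])
    ultimately have "eventually (\<lambda>n. B n N < r) sequentially"
      by (rule order_tendstoD(2))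
    then obtain n0 where n0: "\<And>n. n \<ge> n0 \<Longrightarrow> B n N < r"
      by (auto simp: eventually_sequentially)
    show "\<exists>no. \<forall>n\<ge>no. norm (SS (e n) p - 0) < r"
    proof (intro exI allI impI)
      fix n assume nn: "max n0 1 \<le> n"
      then have "SS (e n) p \<le> B n N" "0 \<le> SS (e n) p" using bound by auto
      then show "norm (SS (e n) p - 0) < r"
        using n0[of n] nn by auto
    qed
  qed
qed

lemma knot_limit:
  fixes r :: "nat \<Rightarrow> nat \<Rightarrow> real" and p :: "nat \<Rightarrow> real"
  assumes r2: "\<And>n. n \<ge> 1 \<Longrightarrow> summable (\<lambda>j. (r n j)\<^sup>2)"
    and pC: "p \<in> convexL2"
    and lim: "(\<lambda>n. SS (r n) p) \<longlonglongrightarrow> 0"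
    and knot: "is_knot p s"
  shows "\<exists>n0. \<forall>n\<ge>n0. is_knot (lse (r n)) s"
proof -
  define q where "q n = lse (r n)" for n
  have p2: "summable (\<lambda>j. (p j)\<^sup>2)" using pC by (simp add: convexL2_def)
  have qj: "(\<lambda>n. q n j) \<longlonglongrightarrow> p j" for j
  proof -
    have sq: "(\<lambda>n. sqrt (SS (r n) p)) \<longlonglongrightarrow> sqrt 0" by (intro tendsto_intros lim)
    have "(\<lambda>n. 2 * sqrt (SS (r n) p)) \<longlonglongrightarrow> 2 * 0" using sq by (intro tendsto_intros) simp
    then have g: "(\<lambda>n. 2 * sqrt (SS (r n) p)) \<longlonglongrightarrow> 0" by simp
    have "eventually (\<lambda>n. norm (q n j - p j) \<le> 2 * sqrt (SS (r n) p)) sequentially"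
      unfolding eventually_sequentially
    proof (intro exI allI impI)
      fix n :: nat assume n: "1 \<le> n"
      have L: "q n \<in> convexL2" "\<forall>c\<in>convexL2. SS (r n) (q n) \<le> SS (r n) c"
        using lse_min[OF r2[OF n]] unfolding q_def Phi_SS by auto
      have q2: "summable (\<lambda>j. (q n j)\<^sup>2)" using L by (simp add: convexL2_def)
      have a: "(r n j - q n j)\<^sup>2 \<le> SS (r n) (q n)" unfolding SS_def
        by (rule term_le_suminf[OF sq_summable_diff[OF r2[OF n] q2]]) simp
      have b: "(r n j - p j)\<^sup>2 \<le> SS (r n) p" unfolding SS_def
        by (rule term_le_suminf[OF sq_summable_diff[OF r2[OF n] p2]]) simp
      have c: "SS (r n) (q n) \<le> SS (r n) p" using L pC by blast
      have a': "\<bar>r n j - q n j\<bar> \<le> sqrt (SS (r n) p)"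
        using a c by (metis real_sqrt_abs real_sqrt_le_mono order_trans)
      have b': "\<bar>r n j - p j\<bar> \<le> sqrt (SS (r n) p)"
        using b by (metis real_sqrt_abs real_sqrt_le_mono)
      show "norm (q n j - p j) \<le> 2 * sqrt (SS (r n) p)"
        using a' b' by simp
    qed
    then have "(\<lambda>n. q n j - p j) \<longlonglongrightarrow> 0" using g by (rule Lim_null_comparison)
    then show ?thesis by (simp add: LIM_zero_iff)
  qed
  have "(\<lambda>n. sdiff (q n) s) \<longlonglongrightarrow> sdiff p s"
    unfolding sdiff_def by (intro tendsto_intros qj)
  moreover have "0 < sdiff p s" using knot by (simp add: is_knot_def)
  ultimately have "eventually (\<lambda>n. 0 < sdiff (q n) s) sequentially"
    by (rule order_tendstoD(1))
  then obtain n0 where "\<And>n. n \<ge> n0 \<Longrightarrow> 0 < sdiff (q n) s" by (auto simp: eventually_sequentially)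
  then show ?thesis using knot by (auto simp: is_knot_def q_def)
qed



lemma pmf_sums: "pmf (P::nat pmf) sums 1"
proof -
  have "(\<lambda>N. measure (measure_pmf P) {..<N}) \<longlonglongrightarrow> measure (measure_pmf P) (\<Union>N. {..<N})"
    by (rule measure_pmf.finite_Lim_measure_incseq) (auto simp: incseq_def)
  moreover have "(\<Union>N. {..<N::nat}) = UNIV" by auto
  moreover have "measure (measure_pmf P) UNIV = 1"
    using measure_pmf.prob_space by simp
  ultimately show ?thesis
    by (simp add: sums_def measure_measure_pmf_finite)
qed

lemma emp_alt:
  "emp_pmf X n \<omega> j = (\<Sum>i\<in>{1..n}. if X i \<omega> = j then 1 / real n else 0)"
proof -
  have "real (card {i \<in> {1..n}. X i \<omega> = j}) = (\<Sum>i\<in>{i \<in> {1..n}. X i \<omega> = j}. 1)" by simp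
  also have "\<dots> = (\<Sum>i\<in>{1..n}. if X i \<omega> = j then 1 else 0)"
    by (rule sum.inter_filter) simp
  finally have "real (card {i \<in> {1..n}. X i \<omega> = j}) = (\<Sum>i\<in>{1..n}. if X i \<omega> = j then 1 else 0)" .
  then have "emp_pmf X n \<omega> j = (\<Sum>i\<in>{1..n}. (if X i \<omega> = j then 1 else 0) / real n)"
    by (simp add: emp_pmf_def sum_divide_distrib)
  also have "\<dots> = (\<Sum>i\<in>{1..n}. if X i \<omega> = j then 1 / real n else 0)"
    by (intro sum.cong) auto
  finally show ?thesis .
qed

lemma emp_nonneg: "0 \<le> emp_pmf X n \<omega> j"
  by (simp add: emp_pmf_def)

lemma emp_sums:
  assumes "n \<ge> 1" shows "emp_pmf X n \<omega> sums 1"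
proof -
  have "(\<lambda>j. \<Sum>i\<in>{1..n}. if X i \<omega> = j then 1 / real n else 0) sums (\<Sum>i\<in>{1..n}. 1 / real n)"
  proof (rule sums_sum)
    fix i
    have "(\<lambda>j. if X i \<omega> = j then 1 / real n else 0) = (\<lambda>j. if j = X i \<omega> then 1 / real n else 0)"
      by auto
    then show "(\<lambda>j. if X i \<omega> = j then 1 / real n else 0) sums (1 / real n)"
      using sums_single[of "X i \<omega>" "\<lambda>_. 1 / real n"] by simp
  qed
  moreover have "(\<Sum>i\<in>{1..n}. 1 / real n) = 1" using assms by simp
  ultimately show ?thesis by (simp add: emp_alt[abs_def])
qed

lemma sq_summable_of_sums1:
  fixes f :: "nat \<Rightarrow> real"
  assumes "f sums 1" "\<And>j. 0 \<le> f j"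
  shows "summable (\<lambda>j. (f j)\<^sup>2)"
proof (rule comp_test[OF sums_summable[OF assms(1)]])
  fix j
  have "f j \<le> 1" by (rule sums_le_1[OF assms])
  then have "f j * f j \<le> f j * 1" using assms(2) by (intro mult_left_mono) auto
  then show "norm ((f j)\<^sup>2) \<le> f j" by (simp add: power2_eq_square)
qed

context prob_space
begin

lemma emp_tail:
  fixes X :: "nat \<Rightarrow> 'a \<Rightarrow> nat" and P :: "nat pmf"
  assumes indep: "indep_vars (\<lambda>_. count_space UNIV) X {1..}"
    and dist: "\<And>i. i \<ge> 1 \<Longrightarrow> distr M (count_space UNIV) (X i) = measure_pmf P"
    and n: "n \<ge> 1" and d: "d > 0"
  shows "prob {\<omega> \<in> space M. d \<le> \<bar>emp_pmf X n \<omega> j - pmf P j\<bar>} \<le> 2 * exp (-2 * real n * d\<^sup>2)"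
proof -
  define Y where "Y i \<omega> = (if X i \<omega> = j then 1 else 0::real)" for i \<omega>
  have Xm: "X i \<in> measurable M (count_space UNIV)" if "i \<ge> 1" for i
    using indep that by (auto simp: indep_vars_def)
  have indY: "indep_vars (\<lambda>_. borel) Y {1..n}"
    unfolding Y_def
    by (rule indep_vars_compose2[where Y = "\<lambda>i x. if x = j then 1 else 0 :: real",
          OF indep_vars_subset[OF indep]]) auto
  have EY: "expectation (Y i) = pmf P j" if "i \<in> {1..n}" for i
  proof -
    have "expectation (Y i) = integral\<^sup>L (distr M (count_space UNIV) (X i)) (\<lambda>x. if x = j then 1 else 0 :: real)"
      using that by (subst integral_distr[OF Xm]) (auto simp: Y_def[abs_def])
    also have "\<dots> = integral\<^sup>L (measure_pmf P) (indicator {j})"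
    proof -
      have "(\<lambda>x. if x = j then 1 else 0 :: real) = indicator {j}" by (auto simp: indicator_def)
      then show ?thesis using that dist by simp
    qed
    also have "\<dots> = pmf P j" by (simp add: measure_pmf_single)
    finally show ?thesis .
  qed
  interpret H: Hoeffding_ineq M "{1..n}" Y "\<lambda>_. 0" "\<lambda>_. 1" "\<Sum>i\<in>{1..n}. expectation (Y i)"
  proof unfold_locales
    show "AE x in M. Y i x \<in> {0..1}" for i by (simp add: Y_def)
    show "indep_vars (\<lambda>_. borel) Y {1..n}" by (rule indY)
  qed simp_all
  have mu: "(\<Sum>i\<in>{1..n}. expectation (Y i)) = real n * pmf P j"
    using EY by simp
  have empY: "emp_pmf X n \<omega> j = (\<Sum>i\<in>{1..n}. Y i \<omega>) / real n" for \<omega>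
    unfolding emp_alt sum_divide_distrib by (intro sum.cong) (auto simp: Y_def)
  have npos: "real n > 0" using n by simp
  have set_eq: "{\<omega> \<in> space M. d \<le> \<bar>emp_pmf X n \<omega> j - pmf P j\<bar>} =
      {x \<in> space M. real n * d \<le> \<bar>(\<Sum>i\<in>{1..n}. Y i x) - (\<Sum>i\<in>{1..n}. expectation (Y i))\<bar>}"
  proof -
    have "d \<le> \<bar>S / real n - pmf P j\<bar> \<longleftrightarrow> real n * d \<le> \<bar>S - real n * pmf P j\<bar>" for S
    proof -
      have "S / real n - pmf P j = (S - real n * pmf P j) / real n" using npos by (simp add: field_simps)
      then have "\<bar>S / real n - pmf P j\<bar> = \<bar>S - real n * pmf P j\<bar> / real n" by simp
      then show ?thesis using npos by (simp add: field_simps mult.commute)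
    qed
    then show ?thesis unfolding mu empY by simp
  qed
  have "prob {x \<in> space M. real n * d \<le> \<bar>(\<Sum>i\<in>{1..n}. Y i x) - (\<Sum>i\<in>{1..n}. expectation (Y i))\<bar>}
      \<le> 2 * exp (-2 * (real n * d)\<^sup>2 / (\<Sum>i\<in>{1..n}. (1 - 0)\<^sup>2))"
    using npos d by (intro H.Hoeffding_ineq_abs_ge) auto
  also have "-2 * (real n * d)\<^sup>2 / (\<Sum>i\<in>{1..n}. (1 - 0)\<^sup>2) = -2 * real n * d\<^sup>2"
    using npos by (simp add: power2_eq_square field_simps)
  finally show ?thesis unfolding set_eq .
qed

lemma emp_ae_conv:
  fixes X :: "nat \<Rightarrow> 'a \<Rightarrow> nat" and P :: "nat pmf"
  assumes indep: "indep_vars (\<lambda>_. count_space UNIV) X {1..}"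
    and dist: "\<And>i. i \<ge> 1 \<Longrightarrow> distr M (count_space UNIV) (X i) = measure_pmf P"
  shows "AE \<omega> in M. \<forall>j. (\<lambda>n. emp_pmf X n \<omega> j) \<longlonglongrightarrow> pmf P j"
proof -
  have Xm: "X i \<in> measurable M (count_space UNIV)" if "i \<ge> 1" for i
    using indep that by (auto simp: indep_vars_def)
  have one: "AE \<omega> in M. eventually (\<lambda>n. \<bar>emp_pmf X n \<omega> j - pmf P j\<bar> < d) sequentially"
    if d: "d > 0" for j d
  proof -
    define A where "A n = {\<omega> \<in> space M. d \<le> \<bar>emp_pmf X n \<omega> j - pmf P j\<bar>}" for n
    have fm: "(\<lambda>\<omega>. emp_pmf X n \<omega> j) \<in> borel_measurable M" for n
    proof -
      have "(\<lambda>\<omega>. (\<Sum>i\<in>{1..n}. if X i \<omega> = j then 1 / real n else 0)) \<in> borel_measurable M"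
      proof (rule borel_measurable_sum)
        fix i assume "i \<in> {1..n}"
        then have "(\<lambda>x. if x = j then 1 / real n else 0) \<circ> X i \<in> borel_measurable M"
          by (intro measurable_comp[OF Xm]) auto
        then show "(\<lambda>\<omega>. if X i \<omega> = j then 1 / real n else 0) \<in> borel_measurable M"
          by (simp add: comp_def)
      qed
      then show ?thesis by (simp add: emp_alt)
    qed
    have meas: "A n \<in> sets M" for n
      unfolding A_def using fm[of n] by measurable
    have bnd: "measure M (A n) \<le> 2 * exp (-2 * d\<^sup>2) ^ n" for n
    proof (cases "n \<ge> 1")
      case True
      have "measure M (A n) \<le> 2 * exp (-2 * real n * d\<^sup>2)"
        unfolding A_def by (rule emp_tail[OF indep dist True d])
      also have "exp (-2 * real n * d\<^sup>2) = exp (-2 * d\<^sup>2) ^ n"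
        by (subst exp_of_nat_mult[symmetric]) (simp add: mult_ac)
      finally show ?thesis .
    next
      case False
      then have "n = 0" by simp
      have "prob (A 0) \<le> 1" by (rule prob_le_1)
      then have "prob (A 0) \<le> 2" by linarith
      with \<open>n = 0\<close> show ?thesis by simp
    qed
    have sumA: "summable (\<lambda>n. measure M (A n))"
    proof (rule comp_test)
      show "summable (\<lambda>n. 2 * exp (-2 * d\<^sup>2) ^ n)"
        using d by (intro summable_mult summable_geometric) simp
      show "norm (measure M (A n)) \<le> 2 * exp (-2 * d\<^sup>2) ^ n" for n using bnd[of n] by simp
    qed
    have "AE \<omega> in M. eventually (\<lambda>n. \<omega> \<in> space M - A n) sequentially"
      by (rule borel_cantelli_AE1[OF meas _ sumA]) (simp add: emeasure_eq_measure)
    then show ?thesis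
      by (rule eventually_mono) (auto simp: A_def elim!: eventually_mono)
  qed
  have "\<forall>j. \<forall>m::nat. AE \<omega> in M. eventually (\<lambda>n. \<bar>emp_pmf X n \<omega> j - pmf P j\<bar> < 1 / (real m + 1)) sequentially"
    using one by simp
  then have "AE \<omega> in M. \<forall>j. \<forall>m::nat. eventually (\<lambda>n. \<bar>emp_pmf X n \<omega> j - pmf P j\<bar> < 1 / (real m + 1)) sequentially"
    by (simp add: AE_all_countable)
  then show ?thesis
  proof (rule eventually_mono)
    fix \<omega>
    assume H: "\<forall>j. \<forall>m::nat. eventually (\<lambda>n. \<bar>emp_pmf X n \<omega> j - pmf P j\<bar> < 1 / (real m + 1)) sequentially"
    show "\<forall>j. (\<lambda>n. emp_pmf X n \<omega> j) \<longlonglongrightarrow> pmf P j"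
    proof
    fix j
    show "(\<lambda>n. emp_pmf X n \<omega> j) \<longlonglongrightarrow> pmf P j"
    proof (rule LIMSEQ_I)
      fix r :: real assume r: "0 < r"
      obtain m :: nat where m: "inverse (real (Suc m)) < r" using reals_Archimedean[OF r] by blast
      have "1 / (real m + 1) < r" using m by (simp add: inverse_eq_divide add.commute)
      moreover from H obtain N where "\<And>n. n \<ge> N \<Longrightarrow> \<bar>emp_pmf X n \<omega> j - pmf P j\<bar> < 1 / (real m + 1)"
        by (meson eventually_sequentially)
      ultimately show "\<exists>no. \<forall>n\<ge>no. norm (emp_pmf X n \<omega> j - pmf P j) < r"
        by (metis less_trans real_norm_def)
    qed
    qed
  qed
qed

end

theorem proposition3:
  fixes M :: "'a measure" and X :: "nat \<Rightarrow> 'a \<Rightarrow> nat" and P :: "nat pmf" and s :: nat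
  assumes "prob_space M"
    and "prob_space.indep_vars M (\<lambda>_. count_space UNIV) X {1..}"
    and "\<And>i. i \<ge> 1 \<Longrightarrow> distr M (count_space UNIV) (X i) = measure_pmf P"
    and "convex_seq (pmf P)"
    and "set_pmf P = UNIV \<or> (\<exists>S::nat. S \<ge> 1 \<and> set_pmf P = {0..S})"
    and "s > 0"
    and "is_knot (pmf P) s"
  shows "AE \<omega> in M. \<exists>n0. \<forall>n\<ge>n0. is_knot (lse (emp_pmf X n \<omega>)) s"
proof -
  interpret prob_space M by fact
  have pC: "pmf P \<in> convexL2"
    using assms(4) sq_summable_of_sums1[OF pmf_sums pmf_nonneg] by (simp add: convexL2_def)
  show ?thesis
    using emp_ae_conv[OF assms(2,3)]
  proof (rule eventually_mono)
    fix \<omega> assume H: "\<forall>j. (\<lambda>n. emp_pmf X n \<omega> j) \<longlonglongrightarrow> pmf P j"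
    have L: "(\<lambda>n. SS (emp_pmf X n \<omega>) (pmf P)) \<longlonglongrightarrow> 0"
      by (rule l2_conv[OF emp_nonneg emp_sums pmf_nonneg pmf_sums]) (use H in auto)
    show "\<exists>n0. \<forall>n\<ge>n0. is_knot (lse (emp_pmf X n \<omega>)) s"
      by (rule knot_limit[OF _ pC L assms(7)])
         (rule sq_summable_of_sums1[OF emp_sums emp_nonneg])
  qed
qed

end
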